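(* Let $m\in\mathbb{N}$, $r\in\{1,\dots,m\}$, and let $Z_r$ be the set of all vertices of $D_m$ of generation number $r$. Then every connected component of the graph $D_m\setminus Z_r$ has diameter (with respect to the metric $d_{D_m}$) strictly less than $2^r$.
   Context: Diamonds: $D_0$ is an edge; $D_i$ is obtained from $D_{i-1}$ by replacing each edge $uv$ by a quadrilateral $u,a,v,b$; $D_m$ has the shortest path metric with unit edges. Generation number $r$ consists of the vertices of $D_{m-r+1}$ not belonging to $D_{m-r}$. $D_m\setminus Z_r$ is the graph obtained by deleting the vertices in $Z_r$ and all edges incident to them. *)

theory Defs
  imports Main
begin

text \<open>Vertices of diamond graphs: the two original endpoints S and T of D_0, and
  for every edge (u,v) of D_(i-1), two new vertices Mid u v False and Mid u v True
  forming the quadrilateral u, a, v, b.\<close>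
datatype dvert = S | T | Mid dvert dvert bool

text \<open>Edges of D_i, stored as ordered pairs (the graph itself is undirected).\<close>
fun dedges :: "nat \<Rightarrow> (dvert \<times> dvert) set" where
  "dedges 0 = {(S, T)}"
| "dedges (Suc i) = (\<Union>(u, v)\<in>dedges i. \<Union>b\<in>UNIV. {(u, Mid u v b), (Mid u v b, v)})"

definition dverts :: "nat \<Rightarrow> dvert set" where
  "dverts i = fst ` dedges i \<union> snd ` dedges i"

definition dadj :: "nat \<Rightarrow> dvert \<Rightarrow> dvert \<Rightarrow> bool" where
  "dadj i x y \<longleftrightarrow> (x, y) \<in> dedges i \<or> (y, x) \<in> dedges i"

text \<open>A walk in the graph with vertex set V and adjacency relation E, given as the
  list of its vertices; its length (number of edges) is length - 1.\<close>
definition is_walk :: "dvert set \<Rightarrow> (dvert \<Rightarrow> dvert \<Rightarrow> bool) \<Rightarrow> dvert list \<Rightarrow> bool" where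
  "is_walk V E p \<longleftrightarrow> p \<noteq> [] \<and> set p \<subseteq> V \<and> (\<forall>k < length p - 1. E (p ! k) (p ! Suc k))"

definition ddist :: "nat \<Rightarrow> dvert \<Rightarrow> dvert \<Rightarrow> nat" where
  "ddist m x y = (LEAST n. \<exists>p. is_walk (dverts m) (dadj m) p \<and> hd p = x \<and> last p = y
                               \<and> length p = Suc n)"

definition gen :: "nat \<Rightarrow> nat \<Rightarrow> dvert set" where
  "gen m r = dverts (m - r + 1) - dverts (m - r)"

definition del_verts :: "nat \<Rightarrow> dvert set \<Rightarrow> dvert set" where
  "del_verts m Z = dverts m - Z"

definition del_component :: "nat \<Rightarrow> dvert set \<Rightarrow> dvert \<Rightarrow> dvert set" where
  "del_component m Z x = {y. \<exists>p. is_walk (del_verts m Z) (dadj m) p \<and> hd p = x \<and> last p = y}"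

definition ddiam :: "nat \<Rightarrow> dvert set \<Rightarrow> nat" where
  "ddiam m A = Sup {ddist m x y | x y. x \<in> A \<and> y \<in> A}"

end

theory Submission
  imports Defs
begin

fun lev :: "dvert \<Rightarrow> nat" where
  "lev S = 0" | "lev T = 0" | "lev (Mid u v b) = Suc (max (lev u) (lev v))"

fun near :: "nat \<Rightarrow> dvert \<Rightarrow> dvert" where
  "near L S = S" | "near L T = T"
| "near L (Mid u v c) = (if lev (Mid u v c) \<le> Suc L then Mid u v c
     else if lev v < lev u then (if lev u = Suc L then v else near L u)
     else (if lev v = Suc L then u else near L v))"

lemma near_low: "lev y \<le> Suc L \<Longrightarrow> near L y = y"
  by (cases y) auto

lemma dverts_Suc: "y \<in> dverts (Suc n) \<longleftrightarrow> (\<exists>u v b. (u,v) \<in> dedges n \<and> (y = u \<or> y = Mid u v b \<or> y = v))"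
  unfolding dverts_def by (auto, force+)

lemma in_dverts: "(u,v) \<in> dedges n \<Longrightarrow> u \<in> dverts n \<and> v \<in> dverts n"
  unfolding dverts_def by force

lemma E1: "(u,v) \<in> dedges n \<Longrightarrow> lev u \<le> n \<and> lev v \<le> n \<and> (lev u = n \<or> lev v = n) \<and> (0 < n \<longrightarrow> lev u \<noteq> lev v)"
proof (induction n arbitrary: u v)
  case 0 then show ?case by auto
next
  case (Suc n)
  from Suc.prems obtain a c b where ac: "(a,c) \<in> dedges n" and "(u,v) = (a, Mid a c b) \<or> (u,v) = (Mid a c b, c)"
    by (simp only: dedges.simps) blast
  then have uv: "(u = a \<and> v = Mid a c b) \<or> (u = Mid a c b \<and> v = c)" by auto
  have "lev a \<le> n" "lev c \<le> n" "lev a = n \<or> lev c = n" using Suc.IH[OF ac] by blast+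
  then have m: "lev (Mid a c b) = Suc n" by (auto simp: max_def)
  from uv show ?case
  proof
    assume "u = a \<and> v = Mid a c b" then show ?case using m \<open>lev a \<le> n\<close> by simp
  next
    assume "u = Mid a c b \<and> v = c" then show ?case using m \<open>lev c \<le> n\<close> by simp
  qed
qed

lemma Vlev: "y \<in> dverts n \<Longrightarrow> lev y \<le> n"
  unfolding dverts_def using E1 by force

lemma mono1: "dverts n \<subseteq> dverts (Suc n)"
proof
  fix x assume "x \<in> dverts n"
  then obtain u v where "(u,v) \<in> dedges n" "x = u \<or> x = v" unfolding dverts_def by force
  then show "x \<in> dverts (Suc n)" unfolding dverts_Suc by blast
qed

lemma mono: "dverts n \<subseteq> dverts (n + d)"
  by (induction d) (use mono1 in auto)

lemma monole: "n \<le> m \<Longrightarrow> dverts n \<subseteq> dverts m"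
  using mono[of n "m - n"] by simp

lemma Vpar: "Mid u v c \<in> dverts n \<Longrightarrow> (u,v) \<in> dedges (lev (Mid u v c) - 1)"
proof (induction n)
  case 0 then show ?case unfolding dverts_def by auto
next
  case (Suc n)
  then obtain a b e where ab: "(a,b) \<in> dedges n" "Mid u v c = a \<or> Mid u v c = Mid a b e \<or> Mid u v c = b"
    unfolding dverts_Suc by blast
  show ?case
  proof (cases "Mid u v c = Mid a b e")
    case True
    with ab E1[OF ab(1)] show ?thesis by auto
  next
    case False
    with ab in_dverts[OF ab(1)] Suc.IH show ?thesis by auto
  qed
qed

lemma down1: "y \<in> dverts (Suc n) \<Longrightarrow> lev y \<le> n \<Longrightarrow> y \<in> dverts n"
proof -
  assume a: "y \<in> dverts (Suc n)" "lev y \<le> n"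
  then obtain u v b where uv: "(u,v) \<in> dedges n" "y = u \<or> y = Mid u v b \<or> y = v"
    unfolding dverts_Suc by blast
  show ?thesis using uv E1[OF uv(1)] in_dverts[OF uv(1)] a(2) by auto
qed

lemma down: "y \<in> dverts (j + d) \<Longrightarrow> lev y \<le> j \<Longrightarrow> y \<in> dverts j"
proof (induction d)
  case 0 then show ?case by simp
next
  case (Suc d)
  have "lev y \<le> j + d" using Suc.prems by simp
  then have "y \<in> dverts (j + d)" using down1 Suc.prems by simp
  then show ?case using Suc.IH Suc.prems by simp
qed

lemma edge_inv:
  "n \<ge> Suc L \<Longrightarrow> (y,y') \<in> dedges n \<Longrightarrow> lev y \<noteq> Suc L \<Longrightarrow> lev y' \<noteq> Suc L \<Longrightarrow> near L y = near L y'"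
proof (induction n arbitrary: y y')
  case 0 then show ?case by simp
next
  case (Suc n)
  then obtain u v b where uv: "(u,v) \<in> dedges n" "(y,y') = (u, Mid u v b) \<or> (y,y') = (Mid u v b, v)"
    by auto
  note e = E1[OF uv(1)]
  have nL: "n \<noteq> L" using Suc.prems uv(2) e by (auto simp: max_def split: if_splits)
  hence nL2: "n \<ge> Suc L" using Suc.prems by simp
  hence lM: "lev (Mid u v b) = Suc n" "\<not> lev (Mid u v b) \<le> Suc L" using e by auto
  show ?case
  proof (cases "lev v < lev u")
    case True
    hence lu: "lev u = n" using e by auto
    show ?thesis
    proof (cases "(y,y') = (u, Mid u v b)")
      case True
      with Suc.prems lu lM True show ?thesis using \<open>lev v < lev u\<close> by auto
    next
      case False
      hence yy: "y = Mid u v b" "y' = v" using uv(2) by auto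
      show ?thesis
      proof (cases "n = Suc L")
        case True
        then show ?thesis using yy lM lu \<open>lev v < lev u\<close> near_low[of v L] by simp
      next
        case False
        have "near L u = near L v" using Suc.IH[OF nL2 uv(1)] False lu Suc.prems yy by auto
        then show ?thesis using yy lM lu \<open>lev v < lev u\<close> False by simp
      qed
    qed
  next
    case False
    hence lu: "lev v = n" "lev u < n" using e nL2 by auto
    show ?thesis
    proof (cases "(y,y') = (Mid u v b, v)")
      case True
      with Suc.prems lu lM True show ?thesis using False by auto
    next
      case F2: False
      hence yy: "y = u" "y' = Mid u v b" using uv(2) by auto
      show ?thesis
      proof (cases "n = Suc L")
        case True
        then show ?thesis using yy lM lu False near_low[of u L] by simp
      next
        case F3: False
        have "near L u = near L v" using Suc.IH[OF nL2 uv(1)] F3 lu Suc.prems yy by auto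
        then show ?thesis using yy lM lu False F3 by simp
      qed
    qed
  qed
qed

inductive wk :: "nat \<Rightarrow> dvert \<Rightarrow> dvert \<Rightarrow> nat \<Rightarrow> bool" for m where
  refl: "x \<in> dverts m \<Longrightarrow> wk m x x 0"
| step: "dadj m x y \<Longrightarrow> wk m y z k \<Longrightarrow> wk m x z (Suc k)"

lemma dadj_verts: "dadj m x y \<Longrightarrow> x \<in> dverts m \<and> y \<in> dverts m"
  unfolding dadj_def using in_dverts by blast

lemma dadj_sym: "dadj m x y \<Longrightarrow> dadj m y x"
  unfolding dadj_def by blast

lemma wk_trans: "wk m x y k \<Longrightarrow> wk m y z l \<Longrightarrow> wk m x z (k + l)"
  by (induction rule: wk.induct) (auto intro: wk.step)

lemma wk_edge: "dadj m x y \<Longrightarrow> wk m x y 1"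
proof -
  assume a: "dadj m x y"
  then have "y \<in> dverts m" using dadj_verts by blast
  then have "wk m y y 0" by (rule wk.refl)
  from wk.step[OF a this] show ?thesis by simp
qed

lemma wk_sym: "wk m x y k \<Longrightarrow> wk m y x k"
proof (induction rule: wk.induct)
  case (refl x) then show ?case by (rule wk.refl)
next
  case (step x y z k)
  have "wk m y x 1" using wk_edge dadj_sym step.hyps(1) by blast
  from wk_trans[OF step.IH this] show ?case by simp
qed

lemma new_edges: "(u,v) \<in> dedges n \<Longrightarrow> (u, Mid u v b) \<in> dedges (Suc n) \<and> (Mid u v b, v) \<in> dedges (Suc n)"
  by (simp only: dedges.simps) blast

lemma split_adj: "dadj n x y \<Longrightarrow> \<exists>M. dadj (Suc n) x M \<and> dadj (Suc n) M y"
proof (cases "(x,y) \<in> dedges n")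
  case True
  from new_edges[OF True, of True] show ?thesis unfolding dadj_def by blast
next
  case False
  assume "dadj n x y"
  then have "(y,x) \<in> dedges n" using False unfolding dadj_def by blast
  from new_edges[OF this, of True] show ?thesis unfolding dadj_def by blast
qed

lemma wk_double: "wk n a b k \<Longrightarrow> wk (Suc n) a b (2 * k)"
proof (induction rule: wk.induct)
  case (refl x) then show ?case using mono1 by (auto intro: wk.refl)
next
  case (step x y z k)
  obtain M where M: "dadj (Suc n) x M" "dadj (Suc n) M y" using split_adj[OF step.hyps(1)] by blast
  have "wk (Suc n) M z (Suc (2 * k))" by (rule wk.step[OF M(2) step.IH])
  from wk.step[OF M(1) this] show ?case by simp
qed

lemma lift: "dadj l a b \<Longrightarrow> wk (l + d) a b (2 ^ d)"
proof (induction d)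
  case 0 then show ?case using wk_edge by simp
next
  case (Suc d)
  then show ?case using wk_double[of "l + d" a b "2^d"] by simp
qed

lemma liftle: "dadj l a b \<Longrightarrow> l \<le> m \<Longrightarrow> wk m a b (2 ^ (m - l))"
  using lift[of l a b "m - l"] by simp

lemma wk_walk: "wk m x y k \<Longrightarrow> \<exists>p. is_walk (dverts m) (dadj m) p \<and> hd p = x \<and> last p = y \<and> length p = Suc k"
proof (induction rule: wk.induct)
  case (refl x)
  then show ?case by (intro exI[of _ "[x]"]) (simp add: is_walk_def)
next
  case (step x y z k)
  then obtain p where p: "is_walk (dverts m) (dadj m) p" "hd p = y" "last p = z" "length p = Suc k" by blast
  have "is_walk (dverts m) (dadj m) (x # p)"
    unfolding is_walk_def
  proof (intro conjI allI impI)
    show "set (x # p) \<subseteq> dverts m" using p(1) dadj_verts[OF step.hyps(1)] by (simp add: is_walk_def)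
  next
    fix i assume i: "i < length (x # p) - 1"
    show "dadj m ((x # p) ! i) ((x # p) ! Suc i)"
    proof (cases i)
      case 0 then show ?thesis using p step.hyps(1) by (cases p) auto
    next
      case (Suc j) then show ?thesis using p(1) i by (simp add: is_walk_def)
    qed
  qed simp
  then show ?case using p by (intro exI[of _ "x # p"]) (cases p, auto)
qed

lemma ddist_le: "wk m x y k \<Longrightarrow> ddist m x y \<le> k"
  unfolding ddist_def using wk_walk by (blast intro: Least_le)

lemma pow_step: "1 \<le> l \<Longrightarrow> l \<le> m \<Longrightarrow> (2::nat) ^ (m - (l - 1)) = 2 * 2 ^ (m - l)"
proof -
  assume "1 \<le> l" "l \<le> m"
  then have "m - (l - 1) = Suc (m - l)" by simp
  then show ?thesis by simp
qed

lemma dist_near: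
  "y \<in> dverts m \<Longrightarrow> Suc (Suc L) \<le> lev y \<Longrightarrow>
    \<exists>k. wk m (near L y) y k \<and> k + 2 ^ (m - lev y) \<le> 2 ^ (m - Suc L)"
proof (induction y)
  case S then show ?case by simp
next
  case T then show ?case by simp
next
  case (Mid u v c)
  let ?y = "Mid u v c"
  let ?l = "lev ?y"
  have uv: "(u,v) \<in> dedges (?l - 1)" using Vpar Mid.prems(1) by blast
  have lm: "?l \<le> m" using Vlev Mid.prems(1) by blast
  have e: "lev u \<le> ?l - 1 \<and> lev v \<le> ?l - 1 \<and> (lev u = ?l - 1 \<or> lev v = ?l - 1) \<and> lev u \<noteq> lev v"
    using E1[OF uv] Mid.prems(2) by auto
  have ed: "(u, ?y) \<in> dedges ?l" "(?y, v) \<in> dedges ?l"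
  proof -
    have "Suc (?l - 1) = ?l" using Mid.prems(2) by simp
    then show "(u, ?y) \<in> dedges ?l" "(?y, v) \<in> dedges ?l" using new_edges[OF uv, of c] by metis+
  qed
  have wu: "wk m u ?y (2 ^ (m - ?l))" using liftle[OF _ lm] ed(1) unfolding dadj_def by blast
  have wv: "wk m v ?y (2 ^ (m - ?l))" using liftle[OF _ lm] ed(2) unfolding dadj_def by blast
  have pw: "(2::nat) ^ (m - (?l - 1)) = 2 * 2 ^ (m - ?l)" by (rule pow_step[OF _ lm]) simp
  have um: "u \<in> dverts m" "v \<in> dverts m"
  proof -
    have "dverts (?l - 1) \<subseteq> dverts m" by (rule monole) (use lm in linarith)
    then show "u \<in> dverts m" "v \<in> dverts m" using in_dverts[OF uv] by blast+
  qed
  define l where "l = ?l"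
  have l2: "Suc (Suc L) \<le> l" "l \<le> m" using Mid.prems(2) lm unfolding l_def by auto
  have pw': "(2::nat) ^ (m - (l - 1)) = 2 * 2 ^ (m - l)" using pw unfolding l_def .
  have nlow: "\<not> lev ?y \<le> Suc L" using Mid.prems(2) by linarith
  show ?case
  proof (cases "lev v < lev u")
    case True
    hence lu: "lev u = l - 1" using e unfolding l_def by linarith
    show ?thesis
    proof (cases "lev u = Suc L")
      case True
      hence nr: "near L ?y = v" using nlow \<open>lev v < lev u\<close> by (simp only: near.simps if_False if_True simp_thms)
      have "l = Suc (Suc L)" using True lu l2 by linarith
      hence "m - Suc L = m - (l - 1)" by simp
      hence "2 ^ (m - l) + 2 ^ (m - l) \<le> (2::nat) ^ (m - Suc L)" using pw' by simp
      then show ?thesis using wv unfolding l_def nr by blast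
    next
      case False
      hence ge: "Suc (Suc L) \<le> lev u" using lu l2 by linarith
      obtain k where k: "wk m (near L u) u k" "k + 2 ^ (m - lev u) \<le> 2 ^ (m - Suc L)"
        using Mid.IH(1)[OF um(1) ge] by blast
      have nr: "near L ?y = near L u" using nlow \<open>lev v < lev u\<close> False by (simp only: near.simps if_False if_True simp_thms)
      have "k + 2 ^ (m - l) + 2 ^ (m - l) \<le> 2 ^ (m - Suc L)" using k(2) lu pw' by simp
      then show ?thesis using wk_trans[OF k(1) wu] unfolding l_def nr by (metis add.assoc)
    qed
  next
    case False
    hence lu: "lev v = l - 1" using e unfolding l_def by linarith
    show ?thesis
    proof (cases "lev v = Suc L")
      case True
      hence nr: "near L ?y = u" using nlow \<open>\<not> lev v < lev u\<close> by (simp only: near.simps if_False if_True simp_thms)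
      have "l = Suc (Suc L)" using True lu l2 by linarith
      hence "m - Suc L = m - (l - 1)" by simp
      hence "2 ^ (m - l) + 2 ^ (m - l) \<le> (2::nat) ^ (m - Suc L)" using pw' by simp
      then show ?thesis using wu unfolding l_def nr by blast
    next
      case F2: False
      hence ge: "Suc (Suc L) \<le> lev v" using lu l2 by linarith
      obtain k where k: "wk m (near L v) v k" "k + 2 ^ (m - lev v) \<le> 2 ^ (m - Suc L)"
        using Mid.IH(2)[OF um(2) ge] by blast
      have nr: "near L ?y = near L v" using nlow False F2 by (simp only: near.simps if_False if_True simp_thms)
      have "k + 2 ^ (m - l) + 2 ^ (m - l) \<le> 2 ^ (m - Suc L)" using k(2) lu pw' by simp
      then show ?thesis using wk_trans[OF k(1) wv] unfolding l_def nr by (metis add.assoc)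
    qed
  qed
qed

lemma gen_lev: "y \<in> dverts m \<Longrightarrow> lev y = Suc L \<Longrightarrow> Suc L \<le> m \<Longrightarrow> y \<in> dverts (Suc L) - dverts L"
proof -
  assume a: "y \<in> dverts m" "lev y = Suc L" "Suc L \<le> m"
  have "y \<in> dverts (Suc L + (m - Suc L))" using a by simp
  then have "y \<in> dverts (Suc L)" using down a(2) by simp
  moreover have "y \<notin> dverts L" using Vlev a(2) by fastforce
  ultimately show ?thesis by blast
qed

lemma walk_near:
  assumes w: "is_walk V (dadj m) p" and V: "V \<subseteq> dverts m" and nl: "\<forall>y\<in>V. lev y \<noteq> Suc L"
    and Lm: "Suc L \<le> m"
  shows "i < length p \<Longrightarrow> near L (p ! i) = near L (p ! 0)"
proof (induction i)
  case 0 then show ?case by simp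
next
  case (Suc i)
  have a: "dadj m (p ! i) (p ! Suc i)" using w Suc.prems unfolding is_walk_def by simp
  have s: "p ! i \<in> V" "p ! Suc i \<in> V" using w Suc.prems unfolding is_walk_def
    by (meson Suc_lessD nth_mem subsetD)+
  have "near L (p ! i) = near L (p ! Suc i)"
  proof (cases "(p ! i, p ! Suc i) \<in> dedges m")
    case True
    then show ?thesis using edge_inv[OF Lm True] nl s by blast
  next
    case False
    then have "(p ! Suc i, p ! i) \<in> dedges m" using a unfolding dadj_def by blast
    note e = this
    then show ?thesis using edge_inv[OF Lm e] nl s by metis
  qed
  then show ?case using Suc by simp
qed

lemma bound_near: "y \<in> dverts m \<Longrightarrow> lev y \<noteq> Suc L \<Longrightarrow> \<exists>k. wk m (near L y) y k \<and> k + 1 \<le> 2 ^ (m - Suc L)"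
proof (cases "Suc (Suc L) \<le> lev y")
  case True
  assume y: "y \<in> dverts m"
  obtain k where k: "wk m (near L y) y k" "k + 2 ^ (m - lev y) \<le> 2 ^ (m - Suc L)"
    using dist_near[OF y True] by blast
  have "(1::nat) \<le> 2 ^ (m - lev y)" by simp
  then have "k + 1 \<le> 2 ^ (m - Suc L)" using k(2) by linarith
  then show ?thesis using k(1) by blast
next
  case False
  assume y: "y \<in> dverts m" "lev y \<noteq> Suc L"
  then have "near L y = y" using False near_low by simp
  then show ?thesis using y wk.refl[OF y(1)] by (intro exI[of _ 0]) simp
qed

theorem mainTheorem10:
  fixes m r :: nat
  assumes "1 \<le> r" and "r \<le> m"
  shows "\<forall>x \<in> del_verts m (gen m r). ddiam m (del_component m (gen m r) x) < 2 ^ r"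
proof
  fix x assume x: "x \<in> del_verts m (gen m r)"
  define L where "L = m - r"
  have Lm: "Suc L \<le> m" using assms unfolding L_def by simp
  have mL: "m - Suc L = r - 1" using assms unfolding L_def by simp
  have pr: "(2::nat) ^ r = 2 * 2 ^ (r - 1)" using assms by (cases r) auto
  have g: "gen m r = dverts (Suc L) - dverts L" unfolding gen_def L_def by simp
  let ?V = "del_verts m (gen m r)"
  have V: "?V \<subseteq> dverts m" unfolding del_verts_def by blast
  have nl: "\<forall>y\<in>?V. lev y \<noteq> Suc L"
    using gen_lev[OF _ _ Lm] unfolding del_verts_def g by blast
  let ?C = "del_component m (gen m r) x"
  have C: "\<And>y. y \<in> ?C \<Longrightarrow> y \<in> ?V \<and> near L y = near L x"
  proof -
    fix y assume "y \<in> ?C"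
    then obtain p where p: "is_walk ?V (dadj m) p" "hd p = x" "last p = y"
      unfolding del_component_def by blast
    have ne: "p \<noteq> []" using p(1) unfolding is_walk_def by simp
    have "near L (p ! (length p - 1)) = near L (p ! 0)"
      by (rule walk_near[OF p(1) V nl Lm]) (use ne in simp)
    then have "near L y = near L x" using p(2,3) ne by (simp add: last_conv_nth hd_conv_nth)
    moreover have "y \<in> ?V" using p ne unfolding is_walk_def by auto
    ultimately show "y \<in> ?V \<and> near L y = near L x" by blast
  qed
  have bnd: "\<And>y1 y2. y1 \<in> ?C \<Longrightarrow> y2 \<in> ?C \<Longrightarrow> ddist m y1 y2 < 2 ^ r"
  proof -
    fix y1 y2 assume y: "y1 \<in> ?C" "y2 \<in> ?C"
    obtain k1 where k1: "wk m (near L y1) y1 k1" "k1 + 1 \<le> 2 ^ (m - Suc L)"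
      using bound_near C[OF y(1)] V nl by blast
    obtain k2 where k2: "wk m (near L y2) y2 k2" "k2 + 1 \<le> 2 ^ (m - Suc L)"
      using bound_near C[OF y(2)] V nl by blast
    have "near L y1 = near L y2" using C y by simp
    then have "wk m y1 y2 (k1 + k2)" using wk_trans[OF wk_sym[OF k1(1)]] k2(1) by simp
    then have "ddist m y1 y2 \<le> k1 + k2" by (rule ddist_le)
    then show "ddist m y1 y2 < 2 ^ r" using k1(2) k2(2) mL pr by simp
  qed
  let ?D = "{ddist m a b | a b. a \<in> ?C \<and> b \<in> ?C}"
  have D: "?D \<subseteq> {..< 2 ^ r}" using bnd by auto
  then have fin: "finite ?D" using finite_subset by blast
  show "ddiam m ?C < 2 ^ r"
  proof (cases "?D = {}")
    case True
    show ?thesis unfolding ddiam_def True Sup_nat_def by simp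
  next
    case False
    then have "Max ?D \<in> ?D" using fin Max_in by blast
    then have "Max ?D < 2 ^ r" using D by blast
    then show ?thesis unfolding ddiam_def Sup_nat_def using fin False by simp
  qed
qed

end
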